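(* Assume the event $\mathcal{E}$ holds. Then for every true risk minimizer $f^*$, the abstain rate of the selective classifier output by ILESS satisfies $$1-\Phi(\mathrm{ILESS})\le \theta_{f^*}(R_0)\cdot R_0,$$ where $$R_0\triangleq 2R(f^* )+11\frac{A}{m}+6\sqrt{\frac{A}{m}R(f^* )}.$$ Consequently, $1-\Phi(\mathrm{ILESS})\le \theta(R_0)\cdot R_0$.
   Context: Let $\mathcal{F}$ be a hypothesis class of binary classifiers $\mathcal{X}\to\{\pm1\}$ with finite VC dimension $d$. Let $\mathcal{P}_{X,Y}$ be an unknown distribution on $\mathcal{X}\times\{\pm1\}$, and let $S_m$ be an i.i.d. sample of size $m$ from it. With the 0/1 loss, $R(f)=\Pr(f(X)\neq Y)$ is the true risk and $\hat R(f)=\hat R(f,S_m)$ is the empirical risk on $S_m$. $\hat f$ is an empirical risk minimizer over $\mathcal{F}$, and $f^*$ is a true risk minimizer over $\mathcal{F}$ (assumed to exist). Fix $0<\delta<1$ and set $A\triangleq 4d\ln\!\big(\tfrac{16me}{d\delta}\big)$. The event $\mathcal{E}$ is the event that, simultaneously for every $f\in\mathcal{F}$, $$R(f)\le \hat R(f)+\min\Big\{\tfrac{A}{m}+\sqrt{\tfrac{A}{m}\hat R(f)},\ \sqrt{\tfrac{A}{m}R(f)}\Big\}$$ and $$\hat R(f)\le R(f)+\min\Big\{\tfrac{A}{m}+\sqrt{\tfrac{A}{m}R(f)},\ \sqrt{\tfrac{A}{m}\hat R(f)}\Big\}.$$ This event holds with probability at least $1-\delta$. **ILESS.** Let $$\sigma_{\mathrm{ILESS}}=\tfrac{A}{m}+\sqrt{\tfrac{A}{m}\hat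 R(\hat f)}+\tfrac{A}{m}+\sqrt{\tfrac{A}{m}\big[\hat R(\hat f)+\tfrac{A}{m}+\sqrt{\tfrac{A}{m}\hat R(\hat f)}\big]}$$ and $G=\{f\in\mathcal{F}:\hat R(f)\le \hat R(\hat f)+\sigma_{\mathrm{ILESS}}\}$. ILESS outputs $(\hat f,g)$, where $g(x)=1$ if and only if $x\notin DIS(G)$. Here $DIS(G)=\{x:\exists f_1,f_2\in G,\ f_1(x)\neq f_2(x)\}$. The coverage is $\Phi=\Pr_{X}(g(X)=1)$, so the abstain rate is $1-\Phi=\Pr(DIS(G))$. **Disagreement coefficient.** Let $B(f,r)=\{f'\in\mathcal{F}:\Pr_X(f'(X)\neq f(X))\le r\}$ and $\Delta B(f,r)=\Pr(DIS(B(f,r)))$. Then $\theta_f(r_0)=\sup_{r>r_0}\Delta B(f,r)/r$ and $\theta(r_0)=\sup_{f\in\mathcal{F}}\theta_f(r_0)$. *)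

theory Defs
  imports "HOL-Probability.Probability"
begin

(* Classifiers X -> {+1,-1} are modelled as functions 'a => bool (True = +1). *)

definition shatters :: "('a \<Rightarrow> bool) set \<Rightarrow> 'a set \<Rightarrow> bool" where
  "shatters F C \<longleftrightarrow> (\<forall>T\<subseteq>C. \<exists>f\<in>F. \<forall>x\<in>C. f x \<longleftrightarrow> x \<in> T)"

definition vc_dim_eq :: "('a \<Rightarrow> bool) set \<Rightarrow> nat \<Rightarrow> bool" where
  "vc_dim_eq F d \<longleftrightarrow>
     (\<exists>C. finite C \<and> card C = d \<and> shatters F C) \<and>
     (\<forall>C. finite C \<and> shatters F C \<longrightarrow> card C \<le> d)"

definition risk :: "('a \<times> bool) measure \<Rightarrow> ('a \<Rightarrow> bool) \<Rightarrow> real" where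
  "risk P f = measure P {z \<in> space P. f (fst z) \<noteq> snd z}"

definition emp_risk :: "('a \<times> bool) list \<Rightarrow> ('a \<Rightarrow> bool) \<Rightarrow> real" where
  "emp_risk S f = real (length (filter (\<lambda>z. f (fst z) \<noteq> snd z) S)) / real (length S)"

definition A_const :: "nat \<Rightarrow> nat \<Rightarrow> real \<Rightarrow> real" where
  "A_const d m \<delta> = 4 * real d * ln (16 * real m * exp 1 / (real d * \<delta>))"

definition event_E :: "('a \<times> bool) measure \<Rightarrow> ('a \<Rightarrow> bool) set \<Rightarrow> ('a \<times> bool) list \<Rightarrow> real \<Rightarrow> bool" where
  "event_E P F S A \<longleftrightarrow> (\<forall>f\<in>F.
     risk P f \<le> emp_risk S f + min (A / real (length S) + sqrt (A / real (length S) * emp_risk S f))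
                                    (sqrt (A / real (length S) * risk P f)) \<and>
     emp_risk S f \<le> risk P f + min (A / real (length S) + sqrt (A / real (length S) * risk P f))
                                    (sqrt (A / real (length S) * emp_risk S f)))"

definition sigma_iless :: "real \<Rightarrow> real \<Rightarrow> nat \<Rightarrow> real" where
  "sigma_iless Rh A m = A / real m + sqrt (A / real m * Rh) + A / real m
      + sqrt (A / real m * (Rh + A / real m + sqrt (A / real m * Rh)))"

definition iless_G :: "('a \<Rightarrow> bool) set \<Rightarrow> ('a \<times> bool) list \<Rightarrow> real \<Rightarrow> ('a \<Rightarrow> bool) \<Rightarrow> ('a \<Rightarrow> bool) set" where
  "iless_G F S A fh = {f \<in> F. emp_risk S f \<le> emp_risk S fh + sigma_iless (emp_risk S fh) A (length S)}"

definition DIS :: "'a measure \<Rightarrow> ('a \<Rightarrow> bool) set \<Rightarrow> 'a set" where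
  "DIS MX G = {x \<in> space MX. \<exists>f1\<in>G. \<exists>f2\<in>G. f1 x \<noteq> f2 x}"

(* outer probability; coincides with the probability on measurable sets *)
definition outer_prob :: "'a measure \<Rightarrow> 'a set \<Rightarrow> real" where
  "outer_prob M A = Inf {measure M B | B. B \<in> sets M \<and> A \<subseteq> B}"

(* ILESS selector g(x) = 1 iff x \<notin> DIS(G); abstain rate 1 - \<Phi> = Pr(DIS(G)) *)
definition abstain_rate_iless ::
  "'a measure \<Rightarrow> ('a \<Rightarrow> bool) set \<Rightarrow> ('a \<times> bool) list \<Rightarrow> real \<Rightarrow> ('a \<Rightarrow> bool) \<Rightarrow> real" where
  "abstain_rate_iless PX F S A fh = outer_prob PX (DIS PX (iless_G F S A fh))"

definition dis_ball :: "'a measure \<Rightarrow> ('a \<Rightarrow> bool) set \<Rightarrow> ('a \<Rightarrow> bool) \<Rightarrow> real \<Rightarrow> ('a \<Rightarrow> bool) set" where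
  "dis_ball PX F f r = {f' \<in> F. measure PX {x \<in> space PX. f' x \<noteq> f x} \<le> r}"

definition DeltaB :: "'a measure \<Rightarrow> ('a \<Rightarrow> bool) set \<Rightarrow> ('a \<Rightarrow> bool) \<Rightarrow> real \<Rightarrow> real" where
  "DeltaB PX F f r = outer_prob PX (DIS PX (dis_ball PX F f r))"

definition theta_f :: "'a measure \<Rightarrow> ('a \<Rightarrow> bool) set \<Rightarrow> ('a \<Rightarrow> bool) \<Rightarrow> real \<Rightarrow> ereal" where
  "theta_f PX F f r0 = (SUP r\<in>{r0<..}. ereal (DeltaB PX F f r / r))"

definition theta :: "'a measure \<Rightarrow> ('a \<Rightarrow> bool) set \<Rightarrow> real \<Rightarrow> ereal" where
  "theta PX F r0 = (SUP f\<in>F. theta_f PX F f r0)"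

end

theory Submission
  imports Defs
begin


lemma sqrt_bound: fixes a x u c :: real
  assumes "0 \<le> a" "0 \<le> u" "0 \<le> c" "a * x \<le> (u + c)^2"
  shows "sqrt (a * x) \<le> u + c"
  using assms by (metis abs_of_nonneg add_nonneg_nonneg real_sqrt_abs real_sqrt_le_mono)

lemma arith_main: fixes a rs rh rhs rf rhf s :: real
  assumes a: "0 \<le> a" and "0 \<le> rs" and "0 \<le> rh" and "0 \<le> rhf"
  and h1: "rh \<le> rhs" and h2: "rhs \<le> rs + a + sqrt (a * rs)"
  and h3: "rhf \<le> rh + (a + sqrt (a * rh) + a + sqrt (a * (rh + a + sqrt (a * rh))))"
  and h4: "rf \<le> rhf + a + sqrt (a * rhf)"
  shows "rf \<le> rs + 10 * a + 4 * sqrt (a * rs)"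
proof -
  define u where "u = sqrt (a * rs)"
  have u0: "0 \<le> u" using assms u_def by simp
  have uu: "u^2 = a * rs" using assms u_def by simp
  have rh: "rh \<le> rs + a + u" using h1 h2 u_def by simp
  have "a * rh \<le> a * (rs + a + u)" using rh a by (simp add: mult_left_mono)
  also have "\<dots> \<le> (u + a)^2" using uu a u0 by (simp add: power2_eq_square algebra_simps)
  finally have s1: "sqrt (a * rh) \<le> u + a" using sqrt_bound a u0 by blast
  have "a * (rh + a + sqrt (a * rh)) \<le> a * (rs + 3*a + 2*u)" using rh s1 a by (intro mult_left_mono) auto
  also have "\<dots> \<le> (u + 2*a)^2" using uu a u0 by (simp add: power2_eq_square algebra_simps)
  finally have s2: "sqrt (a * (rh + a + sqrt (a * rh))) \<le> u + 2*a" using sqrt_bound[of a u "2*a"] a u0 by simp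
  have rhf: "rhf \<le> rs + 6*a + 3*u" using h3 rh s1 s2 by linarith
  have "a * rhf \<le> a * (rs + 6*a + 3*u)" using rhf a by (simp add: mult_left_mono)
  also have "\<dots> \<le> (u + 3*a)^2" using uu a u0 by (simp add: power2_eq_square algebra_simps)
  finally have s3: "sqrt (a * rhf) \<le> u + 3*a" using sqrt_bound[of a u "3*a"] a u0 by simp
  show ?thesis using h4 rhf s3 u_def by linarith
qed

lemma outer_prob_mono: assumes "A \<subseteq> B" "B \<subseteq> space M"
  shows "outer_prob M A \<le> outer_prob M B"
  unfolding outer_prob_def
proof (rule cInf_superset_mono)
  show "{measure M B' |B'. B' \<in> sets M \<and> B \<subseteq> B'} \<noteq> {}" using assms by blast
  show "bdd_below {measure M B |B. B \<in> sets M \<and> A \<subseteq> B}"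
    by (rule bdd_belowI[of _ 0]) auto
  show "{measure M B' |B'. B' \<in> sets M \<and> B \<subseteq> B'} \<subseteq> {measure M B |B. B \<in> sets M \<and> A \<subseteq> B}"
    using assms by blast
qed

lemma limit_le: fixes D t R0 :: real assumes "\<forall>r>R0. D \<le> t * r" shows "D \<le> t * R0"
proof (rule ccontr)
  assume c: "\<not> D \<le> t * R0"
  show False
  proof (cases "t \<le> 0")
    case True
    have "D \<le> t*(R0+1)" using assms by simp
    moreover have "t*(R0+1) \<le> t*R0" using True by (simp add: algebra_simps)
    ultimately show False using c by linarith
  next
    case False
    define r where "r = R0 + (D - t*R0)/(2*t)"
    have "r > R0" using False c unfolding r_def by (simp add: field_simps)
    moreover have "t * r < D" using False c unfolding r_def by (simp add: field_simps)
    ultimately show False using assms by (meson not_le)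
  qed
qed




lemma DIS_space: "DIS M G \<subseteq> space M" unfolding DIS_def by auto
lemma DIS_mono: assumes "G \<subseteq> H" shows "DIS M G \<subseteq> DIS M H"
proof
  fix x assume "x \<in> DIS M G"
  then obtain f1 f2 where "x \<in> space M" "f1 \<in> G" "f2 \<in> G" "f1 x \<noteq> f2 x" unfolding DIS_def by auto
  then show "x \<in> DIS M H" using assms unfolding DIS_def by auto
qed
lemma dis_ball_mono: "r \<le> r' \<Longrightarrow> dis_ball M F f r \<subseteq> dis_ball M F f r'"
  unfolding dis_ball_def by auto
lemma DeltaB_mono: "r \<le> r' \<Longrightarrow> DeltaB M F f r \<le> DeltaB M F f r'"
  unfolding DeltaB_def by (rule outer_prob_mono[OF DIS_mono[OF dis_ball_mono] DIS_space])

theorem theorem5: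
  fixes MX :: "'a measure" and P :: "('a \<times> bool) measure"
    and F :: "('a \<Rightarrow> bool) set" and d m :: nat and \<delta> :: real
    and S :: "('a \<times> bool) list" and fhat fstar :: "'a \<Rightarrow> bool"
  assumes "prob_space P"
    and "sets P = sets (MX \<Otimes>\<^sub>M count_space UNIV)"
    and "\<forall>f\<in>F. f \<in> MX \<rightarrow>\<^sub>M count_space UNIV"
    and "vc_dim_eq F d"
    and "0 < \<delta>" and "\<delta> < 1"
    and "length S = m" and "0 < m" and "set S \<subseteq> space P"
    and "fhat \<in> F" and "\<forall>f\<in>F. emp_risk S fhat \<le> emp_risk S f"
    and "fstar \<in> F" and "\<forall>f\<in>F. risk P fstar \<le> risk P f"
    and "event_E P F S (A_const d m \<delta>)"
  defines "PX \<equiv> distr P MX fst"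
    and "R0 \<equiv> 2 * risk P fstar + 11 * (A_const d m \<delta> / real m)
               + 6 * sqrt (A_const d m \<delta> / real m * risk P fstar)"
  shows "(theta_f PX F fstar R0 < \<infinity> \<longrightarrow>
            ereal (abstain_rate_iless PX F S (A_const d m \<delta>) fhat) \<le> theta_f PX F fstar R0 * ereal R0)
       \<and> (theta PX F R0 < \<infinity> \<longrightarrow>
            ereal (abstain_rate_iless PX F S (A_const d m \<delta>) fhat) \<le> theta PX F R0 * ereal R0)"
  proof -
  let ?A = "A_const d m \<delta>"
  define a where "a = ?A / real m"
  have Pp: "prob_space P" by fact
  note E = assms(14)[unfolded event_E_def assms(7)]
  have nnR: "\<And>f. 0 \<le> risk P f" by (simp add: risk_def)
  have nnE: "\<And>f. 0 \<le> emp_risk S f" by (simp add: emp_risk_def)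
  have Es: "risk P fstar \<le> emp_risk S fstar + (a + sqrt (a * emp_risk S fstar))"
     "risk P fstar \<le> emp_risk S fstar + sqrt (a * risk P fstar)"
     "emp_risk S fstar \<le> risk P fstar + a + sqrt (a * risk P fstar)"
     "emp_risk S fstar \<le> risk P fstar + sqrt (a * emp_risk S fstar)"
    using E assms(12) unfolding a_def by (auto simp: add.assoc)
  have a0: "0 \<le> a"
  proof (rule ccontr)
    assume "\<not> 0 \<le> a"
    hence an: "a < 0" by simp
    have "sqrt (a * risk P fstar) \<le> 0" using an nnR
      by (simp add: mult_nonpos_nonneg)
    moreover have "sqrt (a * emp_risk S fstar) \<le> 0" using an nnE
      by (simp add: mult_nonpos_nonneg)
    ultimately have eq: "risk P fstar = emp_risk S fstar" "sqrt (a * risk P fstar) = 0"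
      using Es by linarith+
    then show False using Es(1) an by simp
  qed
  have R0: "R0 = 2 * risk P fstar + 11 * a + 6 * sqrt (a * risk P fstar)"
    unfolding R0_def a_def by simp
  have R0nn: "0 \<le> R0" unfolding R0 using a0 nnR by simp
  have measfst: "fst \<in> P \<rightarrow>\<^sub>M MX"
    using measurable_cong_sets[OF assms(2) refl, of MX] measurable_fst by blast
  have spPX: "space PX = space MX" unfolding PX_def by simp
  have setsE: "{z \<in> space P. f (fst z) \<noteq> snd z} \<in> sets P" if "f \<in> F" for f
  proof -
    have [measurable]: "f \<in> MX \<rightarrow>\<^sub>M count_space UNIV" using that assms(3) by blast
    have "{z \<in> space (MX \<Otimes>\<^sub>M count_space UNIV). f (fst z) \<noteq> snd z} \<in> sets (MX \<Otimes>\<^sub>M count_space UNIV)"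
      by measurable
    then show ?thesis using assms(2) sets_eq_imp_space_eq[OF assms(2)] by simp
  qed
  have triangle: "measure PX {x \<in> space PX. f x \<noteq> fstar x} \<le> risk P f + risk P fstar" if "f \<in> F" for f
  proof -
    have [measurable]: "f \<in> MX \<rightarrow>\<^sub>M count_space UNIV" "fstar \<in> MX \<rightarrow>\<^sub>M count_space UNIV"
      using that assms(3,12) by blast+
    have Dm: "{x \<in> space MX. f x \<noteq> fstar x} \<in> sets MX" by measurable
    have "measure PX {x \<in> space PX. f x \<noteq> fstar x} = measure P (fst -` {x \<in> space MX. f x \<noteq> fstar x} \<inter> space P)"
      unfolding spPX PX_def using measure_distr[OF measfst Dm] by simp
    also have "\<dots> \<le> measure P ({z \<in> space P. f (fst z) \<noteq> snd z} \<union> {z \<in> space P. fstar (fst z) \<noteq> snd z})"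
      using prob_space.finite_measure[OF Pp] setsE[OF that] setsE[OF assms(12)]
      by (intro finite_measure.finite_measure_mono) auto
    also have "\<dots> \<le> risk P f + risk P fstar"
      unfolding risk_def using setsE[OF that] setsE[OF assms(12)] by (rule measure_Un_le)
    finally show ?thesis .
  qed
  have Gsub: "iless_G F S ?A fhat \<subseteq> dis_ball PX F fstar R0"
  proof
    fix f assume "f \<in> iless_G F S ?A fhat"
    hence fF: "f \<in> F" and fG: "emp_risk S f \<le> emp_risk S fhat + sigma_iless (emp_risk S fhat) ?A m"
      unfolding iless_G_def assms(7) by auto
    have Ef: "risk P f \<le> emp_risk S f + a + sqrt (a * emp_risk S f)"
      using E fF unfolding a_def by (auto simp: add.assoc)
    have "risk P f \<le> risk P fstar + 10 * a + 4 * sqrt (a * risk P fstar)"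
      apply (rule arith_main[of a _ "emp_risk S fhat", OF a0 nnR nnE nnE _ Es(3) _ Ef])
      using assms(11) assms(12) apply blast
      using fG unfolding sigma_iless_def a_def by simp
    moreover have "0 \<le> sqrt (a * risk P fstar)" using a0 nnR by simp
    ultimately have "measure PX {x \<in> space PX. f x \<noteq> fstar x} \<le> R0"
      using triangle[OF fF] a0 unfolding R0 by linarith
    then show "f \<in> dis_ball PX F fstar R0" using fF unfolding dis_ball_def spPX by auto
  qed
  have ab: "abstain_rate_iless PX F S ?A fhat \<le> DeltaB PX F fstar R0"
    unfolding abstain_rate_iless_def DeltaB_def
    by (rule outer_prob_mono[OF DIS_mono[OF Gsub] DIS_space])
  have Dmono: "DeltaB PX F fstar r \<le> DeltaB PX F fstar r'" if "r \<le> r'" for r r'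
    using that by (rule DeltaB_mono)
  have part1: "ereal (abstain_rate_iless PX F S ?A fhat) \<le> theta_f PX F fstar R0 * ereal R0"
    if fin: "theta_f PX F fstar R0 < \<infinity>"
  proof -
    have lb: "ereal (DeltaB PX F fstar r / r) \<le> theta_f PX F fstar R0" if "r > R0" for r
      unfolding theta_f_def using that by (intro SUP_upper) auto
    from lb[of "R0+1"] fin obtain t where t: "theta_f PX F fstar R0 = ereal t"
      by (cases "theta_f PX F fstar R0") auto
    have "\<forall>r>R0. DeltaB PX F fstar R0 \<le> t * r"
    proof (intro allI impI)
      fix r assume r: "r > R0"
      have "DeltaB PX F fstar r / r \<le> t" using lb[OF r] t by simp
      hence "DeltaB PX F fstar r \<le> t * r" using r R0nn by (simp add: divide_le_eq mult.commute)
      then show "DeltaB PX F fstar R0 \<le> t * r" using Dmono[of R0 r] r by simp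
    qed
    hence "DeltaB PX F fstar R0 \<le> t * R0" by (rule limit_le)
    then show ?thesis using ab t by simp
  qed
  have part2: "ereal (abstain_rate_iless PX F S ?A fhat) \<le> theta PX F R0 * ereal R0"
    if fin: "theta PX F R0 < \<infinity>"
  proof -
    have le: "theta_f PX F fstar R0 \<le> theta PX F R0"
      unfolding theta_def using assms(12) by (intro SUP_upper)
    have "theta_f PX F fstar R0 < \<infinity>" using le fin by (rule le_less_trans)
    hence "ereal (abstain_rate_iless PX F S ?A fhat) \<le> theta_f PX F fstar R0 * ereal R0" by (rule part1)
    also have "\<dots> \<le> theta PX F R0 * ereal R0" using le R0nn by (intro ereal_mult_right_mono) auto
    finally show ?thesis .
  qed
  show ?thesis using part1 part2 by blast
qed

end
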